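(* Let $G$ be a finite graph and $K$ a maximal clique of $G$. Then $\log_2(\mathsf{dn}(K)+2)\le|\widetilde{K}|\le 2^{\mathsf{dn}(K)}$.
   Context: Two vertices are equivalent if they lie in exactly the same maximal cliques of $G$; $\widetilde{K}$ is the set of equivalence classes intersecting $K$. For $X\subseteq V(G)$, with $N(X)$ the set of vertices outside $X$ having a neighbour in $X$, a set $Y\subseteq N(X)$ is $X$-diverse if $N(y_1)\cap X\neq N(y_2)\cap X$ for all distinct $y_1,y_2\in Y$; the diversity number $\mathsf{dn}(X)$ is the maximum size of an $X$-diverse subset of $N(X)$. *)

theory Defs
  imports Complex_Main
begin

definition graph :: "'a set \<Rightarrow> ('a \<Rightarrow> 'a \<Rightarrow> bool) \<Rightarrow> bool" where
  "graph V E \<longleftrightarrow> finite V \<and> (\<forall>u v. E u v \<longrightarrow> u \<in> V \<and> v \<in> V)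
     \<and> (\<forall>u v. E u v \<longrightarrow> E v u) \<and> (\<forall>v. \<not> E v v)"

definition clique :: "'a set \<Rightarrow> ('a \<Rightarrow> 'a \<Rightarrow> bool) \<Rightarrow> 'a set \<Rightarrow> bool" where
  "clique V E C \<longleftrightarrow> C \<subseteq> V \<and> (\<forall>x\<in>C. \<forall>y\<in>C. x \<noteq> y \<longrightarrow> E x y)"

definition maximal_clique :: "'a set \<Rightarrow> ('a \<Rightarrow> 'a \<Rightarrow> bool) \<Rightarrow> 'a set \<Rightarrow> bool" where
  "maximal_clique V E C \<longleftrightarrow> clique V E C \<and> (\<forall>C'. clique V E C' \<and> C \<subseteq> C' \<longrightarrow> C' = C)"

definition clique_equiv :: "'a set \<Rightarrow> ('a \<Rightarrow> 'a \<Rightarrow> bool) \<Rightarrow> 'a rel" where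
  "clique_equiv V E = {(u, v). u \<in> V \<and> v \<in> V \<and>
      (\<forall>C. maximal_clique V E C \<longrightarrow> (u \<in> C \<longleftrightarrow> v \<in> C))}"

text \<open>\<open>K~\<close>: the set of equivalence classes intersecting K.\<close>
definition classes_meeting :: "'a set \<Rightarrow> ('a \<Rightarrow> 'a \<Rightarrow> bool) \<Rightarrow> 'a set \<Rightarrow> 'a set set" where
  "classes_meeting V E K = {Q \<in> V // clique_equiv V E. Q \<inter> K \<noteq> {}}"

definition nbhd :: "'a set \<Rightarrow> ('a \<Rightarrow> 'a \<Rightarrow> bool) \<Rightarrow> 'a \<Rightarrow> 'a set" where
  "nbhd V E y = {u \<in> V. E y u}"

definition set_nbhd :: "'a set \<Rightarrow> ('a \<Rightarrow> 'a \<Rightarrow> bool) \<Rightarrow> 'a set \<Rightarrow> 'a set" where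
  "set_nbhd V E X = {v \<in> V - X. \<exists>x\<in>X. E v x}"

definition diverse :: "'a set \<Rightarrow> ('a \<Rightarrow> 'a \<Rightarrow> bool) \<Rightarrow> 'a set \<Rightarrow> 'a set \<Rightarrow> bool" where
  "diverse V E X Y \<longleftrightarrow> Y \<subseteq> set_nbhd V E X \<and>
     (\<forall>y1\<in>Y. \<forall>y2\<in>Y. y1 \<noteq> y2 \<longrightarrow> nbhd V E y1 \<inter> X \<noteq> nbhd V E y2 \<inter> X)"

definition dn :: "'a set \<Rightarrow> ('a \<Rightarrow> 'a \<Rightarrow> bool) \<Rightarrow> 'a set \<Rightarrow> nat" where
  "dn V E X = Max {card Y | Y. diverse V E X Y}"

end

theory Submission
  imports Defs
begin

lemma ext_max_clique:
  assumes g: "graph V E" and c: "clique V E S"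
  shows "\<exists>C. maximal_clique V E C \<and> S \<subseteq> C"
proof -
  let ?A = "{C. clique V E C \<and> S \<subseteq> C}"
  have "?A \<subseteq> Pow V" unfolding clique_def by auto
  moreover have "finite V" using g unfolding graph_def by auto
  ultimately have finA: "finite ?A" by (meson finite_Pow_iff finite_subset)
  have neA: "?A \<noteq> {}" using c by auto
  obtain m where m: "m \<in> ?A" "\<forall>b\<in>?A. m \<le> b \<longrightarrow> m = b"
    using finite_has_maximal[OF finA neA] by (elim bexE)
  have "maximal_clique V E m" unfolding maximal_clique_def
  proof (intro conjI allI impI)
    show "clique V E m" using m(1) by simp
  next
    fix C' assume "clique V E C' \<and> m \<subseteq> C'"
    then have "C' \<in> ?A" using m(1) by auto
    then show "C' = m" using m(2) \<open>clique V E C' \<and> m \<subseteq> C'\<close> by blast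
  qed
  then show ?thesis using m(1) by auto
qed

lemma closure_fact:
  assumes g: "graph V E" and K: "maximal_clique V E K"
    and y: "y \<in> set_nbhd V E K" and u: "u \<in> K" "E y u" and v: "v \<in> K"
    and R: "(u,v) \<in> clique_equiv V E"
  shows "E y v"
proof -
  have Kc: "clique V E K" using K unfolding maximal_clique_def by auto
  let ?S = "insert y (K \<inter> nbhd V E y)"
  have yV: "y \<in> V" "y \<notin> K" using y unfolding set_nbhd_def by auto
  have "clique V E ?S" using Kc yV g unfolding clique_def nbhd_def graph_def by auto
  then obtain C where C: "maximal_clique V E C" "?S \<subseteq> C" using ext_max_clique g by blast
  have "u \<in> C" using C u Kc unfolding nbhd_def clique_def by auto
  then have "v \<in> C" using R C unfolding clique_equiv_def by auto
  moreover have "y \<in> C" using C by auto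
  moreover have "y \<noteq> v" using yV v by auto
  ultimately show ?thesis using C unfolding maximal_clique_def clique_def by auto
qed

lemma distinguish:
  assumes g: "graph V E" and K: "maximal_clique V E K"
    and u: "u \<in> K" and v: "v \<in> K"
    and sig: "\<forall>y\<in>set_nbhd V E K. u \<in> nbhd V E y \<longrightarrow> v \<in> nbhd V E y"
    and C: "maximal_clique V E C" and uC: "u \<in> C"
  shows "v \<in> C"
proof (rule ccontr)
  assume vC: "v \<notin> C"
  have Kc: "clique V E K" using K unfolding maximal_clique_def by auto
  have Cc: "clique V E C" using C unfolding maximal_clique_def by auto
  have vV: "v \<in> V" using v Kc unfolding clique_def by auto
  have "insert v C \<noteq> C" using vC by auto
  then have "\<not> clique V E (insert v C)" using C unfolding maximal_clique_def by blast
  have symE: "E b a" if "E a b" for a b using that g unfolding graph_def by blast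
  have "\<exists>y\<in>C. y \<noteq> v \<and> \<not> E v y"
  proof (rule ccontr)
    assume "\<not> (\<exists>y\<in>C. y \<noteq> v \<and> \<not> E v y)"
    then have h: "\<And>y. y \<in> C \<Longrightarrow> y \<noteq> v \<Longrightarrow> E v y" by blast
    have "clique V E (insert v C)" using Cc vV h symE unfolding clique_def by auto
    then show False using \<open>\<not> clique V E (insert v C)\<close> by blast
  qed
  then obtain y where y: "y \<in> C" "y \<noteq> v" "\<not> E v y" by blast
  have yK: "y \<notin> K" using y v Kc unfolding clique_def by auto
  have uv: "u \<noteq> v" using u vC uC by auto
  have "y \<noteq> u" using uv u v Kc y unfolding clique_def by auto
  then have Eyu: "E y u" using y uC Cc unfolding clique_def by auto
  have yV: "y \<in> V" using y Cc unfolding clique_def by auto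
  have "y \<in> set_nbhd V E K" using yV yK Eyu u unfolding set_nbhd_def by auto
  moreover have "u \<in> nbhd V E y" using Eyu u Kc unfolding nbhd_def clique_def by auto
  ultimately have "v \<in> nbhd V E y" using sig by blast
  then have "E y v" unfolding nbhd_def by auto
  then show False using y g unfolding graph_def by auto
qed

theorem lemma7p1:
  fixes V :: "'a set" and E :: "'a \<Rightarrow> 'a \<Rightarrow> bool" and K :: "'a set"
  assumes "graph V E" and "V \<noteq> {}" and "maximal_clique V E K"
  shows "log 2 (real (dn V E K) + 2) \<le> real (card (classes_meeting V E K))
       \<and> card (classes_meeting V E K) \<le> 2 ^ dn V E K"
proof -
  note g = assms(1) and K = assms(3)
  define N where "N = set_nbhd V E K"
  define tr where "tr = (\<lambda>y. nbhd V E y \<inter> K)"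
  define T where "T = tr ` N"
  define R where "R = clique_equiv V E"
  define CM where "CM = classes_meeting V E K"
  have fV: "finite V" using g unfolding graph_def by auto
  have Kc: "clique V E K" using K unfolding maximal_clique_def by auto
  have KV: "K \<subseteq> V" using Kc unfolding clique_def by auto
  have fK: "finite K" using KV fV finite_subset by auto
  have Kne: "K \<noteq> {}"
  proof
    assume "K = {}"
    obtain w where "w \<in> V" using assms(2) by auto
    then have "clique V E {w}" unfolding clique_def by auto
    then show False using K \<open>K = {}\<close> unfolding maximal_clique_def by auto
  qed
  have fN: "finite N" unfolding N_def set_nbhd_def using fV by auto
  have fT: "finite T" unfolding T_def using fN by auto
  have A: "card Y \<le> card T" if "diverse V E K Y" for Y
  proof -
    have Y: "Y \<subseteq> N" "inj_on tr Y" using that unfolding diverse_def N_def tr_def inj_on_def by auto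
    then have "card Y = card (tr ` Y)" by (simp add: card_image)
    also have "\<dots> \<le> card T" unfolding T_def using Y fT T_def by (simp add: card_mono image_mono)
    finally show ?thesis .
  qed
  define ch where "ch = (\<lambda>t. SOME y. y \<in> N \<and> tr y = t)"
  have ch: "ch t \<in> N \<and> tr (ch t) = t" if "t \<in> T" for t
  proof -
    have "\<exists>y. y \<in> N \<and> tr y = t" using that unfolding T_def by blast
    then show ?thesis unfolding ch_def by (rule someI_ex)
  qed
  have Ydiv: "diverse V E K (ch ` T)"
    unfolding diverse_def
  proof (intro conjI ballI impI)
    show "ch ` T \<subseteq> set_nbhd V E K" using ch N_def by auto
  next
    fix y1 y2 assume "y1 \<in> ch ` T" "y2 \<in> ch ` T" "y1 \<noteq> y2"
    then obtain t1 t2 where "t1 \<in> T" "t2 \<in> T" "y1 = ch t1" "y2 = ch t2" "t1 \<noteq> t2" by auto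
    then show "nbhd V E y1 \<inter> K \<noteq> nbhd V E y2 \<inter> K" using ch unfolding tr_def by metis
  qed
  have "inj_on ch T"
  proof (rule inj_onI)
    fix x y assume "x \<in> T" "y \<in> T" "ch x = ch y"
    then show "x = y" using ch by metis
  qed
  then have cardeq: "card (ch ` T) = card T" by (rule card_image)
  have mem: "card T \<in> {card Y |Y. diverse V E K Y}"
    using Ydiv cardeq by (metis (mono_tags, lifting) mem_Collect_eq)
  have bnd: "\<forall>y\<in>{card Y |Y. diverse V E K Y}. y \<le> card T" using A by blast
  have fin: "finite {card Y |Y. diverse V E K Y}"
    using bnd by (meson finite_atMost finite_subset atMost_iff subsetI)
  have dnT: "dn V E K = card T"
    unfolding dn_def using Max_eqI[OF fin _ mem] bnd by blast
  have CMK: "CM = (\<lambda>u. R``{u}) ` K"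
  proof
    show "CM \<subseteq> (\<lambda>u. R``{u}) ` K"
    proof
      fix Q assume "Q \<in> CM"
      then obtain x w where Q: "Q = R``{x}" "x \<in> V" "w \<in> Q" "w \<in> K"
        unfolding CM_def classes_meeting_def R_def quotient_def by auto
      have "R``{x} = R``{w}" using Q unfolding R_def clique_equiv_def by auto
      then show "Q \<in> (\<lambda>u. R``{u}) ` K" using Q by auto
    qed
  next
    show "(\<lambda>u. R``{u}) ` K \<subseteq> CM"
    proof
      fix Q assume "Q \<in> (\<lambda>u. R``{u}) ` K"
      then obtain u where u: "u \<in> K" "Q = R``{u}" by auto
      have "u \<in> Q" using u KV unfolding R_def clique_equiv_def by auto
      moreover have "Q \<in> V // R" using u KV by (auto intro: quotientI)
      ultimately show "Q \<in> CM" using u unfolding CM_def classes_meeting_def R_def by auto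
    qed
  qed
  have fCM: "finite CM" using CMK fK by auto
  define sig where "sig = (\<lambda>u. {t \<in> T. u \<in> t})"
  have sigR: "R``{u} = R``{v}" if "u \<in> K" "v \<in> K" "sig u = sig v" for u v
  proof -
    have s: "\<forall>y\<in>N. u \<in> nbhd V E y \<longleftrightarrow> v \<in> nbhd V E y"
    proof
      fix y assume y: "y \<in> N"
      have ty: "tr y \<in> T" using y unfolding T_def by (rule imageI)
      have "tr y \<in> sig u \<longleftrightarrow> tr y \<in> sig v" using that(3) by simp
      then have "u \<in> tr y \<longleftrightarrow> v \<in> tr y" using ty unfolding sig_def by simp
      then show "u \<in> nbhd V E y \<longleftrightarrow> v \<in> nbhd V E y"
        using that(1,2) unfolding tr_def by simp
    qed
    have s1: "\<forall>y\<in>set_nbhd V E K. u \<in> nbhd V E y \<longrightarrow> v \<in> nbhd V E y" using s N_def by simp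
    have s2: "\<forall>y\<in>set_nbhd V E K. v \<in> nbhd V E y \<longrightarrow> u \<in> nbhd V E y" using s N_def by simp
    have "\<forall>C. maximal_clique V E C \<longrightarrow> (u \<in> C \<longleftrightarrow> v \<in> C)"
      using distinguish[OF g K that(1,2) s1] distinguish[OF g K that(2,1) s2] by blast
    moreover have "u \<in> V" "v \<in> V" using that KV by auto
    ultimately have "(u,v) \<in> R" unfolding R_def clique_equiv_def by simp
    then show ?thesis unfolding R_def clique_equiv_def by auto
  qed
  define pick where "pick = (\<lambda>s. SOME u. u \<in> K \<and> sig u = s)"
  have "(\<lambda>u. R``{u}) ` K = (\<lambda>s. R``{pick s}) ` (sig ` K)"
  proof -
    have "R``{u} = R``{pick (sig u)}" if "u \<in> K" for u
    proof -
      have "pick (sig u) \<in> K \<and> sig (pick (sig u)) = sig u"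
        unfolding pick_def using that by (metis (mono_tags, lifting) someI_ex)
      then show ?thesis using sigR that by metis
    qed
    then show ?thesis by (auto simp: image_iff)
  qed
  then have "card CM \<le> card (sig ` K)" using CMK fK by (metis card_image_le finite_imageI)
  also have "\<dots> \<le> card (Pow T)"
    by (rule card_mono) (auto simp: sig_def fT)
  also have "\<dots> = 2 ^ card T" using fT by (simp add: card_Pow)
  finally have up: "card CM \<le> 2 ^ dn V E K" using dnT by simp
  define f where "f = (\<lambda>t. {c \<in> CM. c \<inter> t \<noteq> {}})"
  have tK: "t \<subseteq> K" if "t \<in> T" for t using that unfolding T_def tr_def by auto
  have recon: "t = K \<inter> \<Union>(f t)" if "t \<in> T" for t
  proof
    show "t \<subseteq> K \<inter> \<Union>(f t)"
    proof
      fix u assume u: "u \<in> t"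
      then have uK: "u \<in> K" using tK that by auto
      have "u \<in> R``{u}" using uK KV unfolding R_def clique_equiv_def by auto
      then show "u \<in> K \<inter> \<Union>(f t)" using u uK CMK unfolding f_def by blast
    qed
  next
    show "K \<inter> \<Union>(f t) \<subseteq> t"
    proof
      fix v assume v: "v \<in> K \<inter> \<Union>(f t)"
      then obtain w u where wu: "w \<in> K" "u \<in> t" "(w,u) \<in> R" "(w,v) \<in> R"
        unfolding f_def CMK by auto
      obtain y where y: "y \<in> N" "t = tr y" using \<open>t \<in> T\<close> T_def by auto
      have uK: "u \<in> K" and Eyu: "E y u" using wu y unfolding tr_def nbhd_def by auto
      have "(u,v) \<in> R" using wu unfolding R_def clique_equiv_def by auto
      then have "E y v" using closure_fact[OF g K _ uK Eyu] y v unfolding R_def N_def by auto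
      then show "v \<in> t" using y v KV unfolding tr_def nbhd_def by auto
    qed
  qed
  have finj: "inj_on f T"
  proof (rule inj_onI)
    fix x y assume "x \<in> T" "y \<in> T" "f x = f y"
    then show "x = y" using recon[of x] recon[of y] by simp
  qed
  have fne: "f t \<noteq> {}" if "t \<in> T" for t
  proof -
    obtain y where y: "y \<in> N" "t = tr y" using \<open>t \<in> T\<close> T_def by auto
    then obtain u where u: "u \<in> K" "E y u" unfolding N_def set_nbhd_def by blast
    then have "u \<in> t" using y KV unfolding tr_def nbhd_def by blast
    then show ?thesis using recon[OF that] by auto
  qed
  have fnC: "f t \<noteq> CM" if "t \<in> T" for t
  proof
    assume ft: "f t = CM"
    have "K \<subseteq> \<Union>CM"
    proof
      fix u assume uK: "u \<in> K"
      have "u \<in> R``{u}" using uK KV unfolding R_def clique_equiv_def by auto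
      then show "u \<in> \<Union>CM" using uK CMK by auto
    qed
    then have tKe: "t = K" using recon[OF that] ft by auto
    obtain y where y: "y \<in> N" "t = tr y" using \<open>t \<in> T\<close> T_def by auto
    have yV: "y \<in> V" "y \<notin> K" using y unfolding N_def set_nbhd_def by auto
    have Ey: "E y x" if "x \<in> K" for x using that tKe y unfolding tr_def nbhd_def by blast
    have sym: "E x y" if "x \<in> K" for x using Ey[OF that] g unfolding graph_def by blast
    have "clique V E (insert y K)" using Kc yV Ey sym
      unfolding clique_def by auto
    then show False using K yV unfolding maximal_clique_def by blast
  qed
  have fsub: "f t \<subseteq> CM" for t unfolding f_def by auto
  have "f ` T \<subseteq> Pow CM - {{}, CM}" using fne fnC fsub by blast
  then have "card (f ` T) \<le> card (Pow CM - {{}, CM})"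
    by (intro card_mono) (use fCM in auto)
  then have "card T \<le> card (Pow CM - {{}, CM})" using card_image[OF finj] by simp
  also have "\<dots> = 2 ^ card CM - 2"
  proof -
    have "CM \<noteq> {}" using CMK Kne by auto
    then have "card {{}, CM} = 2" by auto
    then show ?thesis using fCM by (simp add: card_Diff_subset card_Pow)
  qed
  finally have ct0: "card T \<le> 2 ^ card CM - 2" .
  have "(2::nat) \<le> 2 ^ card CM"
  proof -
    have "card CM \<ge> 1" using CMK Kne fCM by (simp add: Suc_leI card_gt_0_iff)
    then show ?thesis using power_increasing[of 1 "card CM" "2::nat"] by simp
  qed
  then have ct: "card T + 2 \<le> 2 ^ card CM" using ct0 by linarith
  have "real (card T + 2) \<le> real (2 ^ card CM)" using ct by (simp only: of_nat_le_iff)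
  then have "real (card T) + 2 \<le> 2 powr real (card CM)"
    by (simp add: powr_realpow)
  then have "log 2 (real (card T) + 2) \<le> real (card CM)"
    by (simp add: le_powr_iff)
  then show ?thesis using up dnT unfolding CM_def by simp
qed

end
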